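(* Consider a seller with one item and a single ex-post rational buyer; the item's quality $q\in Q=[q_1,q_2]$ has CDF $G$ and density $g$ and is observed only by the seller; the buyer's valuation $v(q)$ is monotone increasing in $q$ with inverse $v^{-1}$. The optimal revenue over obedient fixed-price signaling mechanisms equals the optimal revenue over fixed-price mechanisms without signaling (both equal to $\max_p[1-G(v^{-1}(p))]\cdot p$).
   Context: Fixed-price mechanism (no signaling): the seller posts price $p$; the ex-post rational buyer buys iff $v(q)\ge p$; revenue is $p\cdot\Pr[v(q)\ge p]$. Fixed-price signaling mechanism: a pair $(\pi,p)$ with $\pi:Q\to[0,1]$ the probability of sending signal 1 ("buy") at quality $q$; it is obedient if $\int_{q_1}^{v^{-1}(p)}\pi(q)g(q)\,\mathrm{d}q=0$ and $\int_{v^{-1}(p)}^{q_2}[1-\pi(q)]g(q)\,\mathrm{d}q=0$; its revenue is $p\int_Q\pi(q)g(q)\,\mathrm{d}q$. *)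

theory Defs
  imports "HOL-Analysis.Analysis"
begin

definition quality_cdf :: "real \<Rightarrow> (real \<Rightarrow> real) \<Rightarrow> real \<Rightarrow> real" where
  "quality_cdf q1 g x = (LINT q:{q1..x}|lborel. g q)"

definition fixed_price_revenue ::
  "real \<Rightarrow> real \<Rightarrow> (real \<Rightarrow> real) \<Rightarrow> (real \<Rightarrow> real) \<Rightarrow> real \<Rightarrow> real" where
  "fixed_price_revenue q1 q2 g v p = p * (LINT q:{q\<in>{q1..q2}. p \<le> v q}|lborel. g q)"

text \<open>Obedience of a fixed-price signaling mechanism (pi,p).  Since v is strictly
  increasing, {q in Q. v q < p} = [q1, v^{-1}(p)) and {q in Q. v q >= p} = [v^{-1}(p), q2].\<close>
definition obedient ::
  "real \<Rightarrow> real \<Rightarrow> (real \<Rightarrow> real) \<Rightarrow> (real \<Rightarrow> real) \<Rightarrow> (real \<Rightarrow> real) \<Rightarrow> real \<Rightarrow> bool" where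
  "obedient q1 q2 g v \<pi> p \<longleftrightarrow>
     (LINT q:{q\<in>{q1..q2}. v q < p}|lborel. \<pi> q * g q) = 0 \<and>
     (LINT q:{q\<in>{q1..q2}. p \<le> v q}|lborel. (1 - \<pi> q) * g q) = 0"

definition signaling_mechanism :: "real \<Rightarrow> real \<Rightarrow> (real \<Rightarrow> real) \<Rightarrow> bool" where
  "signaling_mechanism q1 q2 \<pi> \<longleftrightarrow>
     \<pi> \<in> borel_measurable lborel \<and> (\<forall>q\<in>{q1..q2}. 0 \<le> \<pi> q \<and> \<pi> q \<le> 1)"

definition signaling_revenue :: "real \<Rightarrow> real \<Rightarrow> (real \<Rightarrow> real) \<Rightarrow> (real \<Rightarrow> real) \<Rightarrow> real \<Rightarrow> real" where
  "signaling_revenue q1 q2 g \<pi> p = p * (LINT q:{q1..q2}|lborel. \<pi> q * g q)"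

end

theory Submission
  imports Defs
begin

lemma sm_le_iff:
  fixes v :: "real \<Rightarrow> real"
  assumes "strict_mono_on S v" "x \<in> S" "y \<in> S"
  shows "v x \<le> v y \<longleftrightarrow> x \<le> y"
proof
  assume h: "v x \<le> v y"
  show "x \<le> y"
  proof (rule ccontr)
    assume "\<not> x \<le> y"
    hence "y < x" by simp
    hence "v y < v x" using strict_mono_onD[OF assms(1) assms(3) assms(2)] by blast
    thus False using h by simp
  qed
next
  assume "x \<le> y"
  hence "x = y \<or> x < y" by auto
  thus "v x \<le> v y" using strict_mono_onD[OF assms(1) assms(2) assms(3)] by auto
qed

theorem mainTheorem4:
  fixes q1 q2 :: real and g v :: "real \<Rightarrow> real"
  assumes "q1 < q2"
    and "\<forall>q\<in>{q1..q2}. 0 \<le> g q"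
    and "set_integrable lborel {q1..q2} g"
    and "(LINT q:{q1..q2}|lborel. g q) = 1"
    and "strict_mono_on {q1..q2} v"
    and "continuous_on {q1..q2} v"
  shows "Sup {signaling_revenue q1 q2 g \<pi> p | \<pi> p.
               signaling_mechanism q1 q2 \<pi> \<and> obedient q1 q2 g v \<pi> p}
         = Sup (range (fixed_price_revenue q1 q2 g v))
       \<and> (\<exists>p\<in>v ` {q1..q2}.
            (1 - quality_cdf q1 g (inv_into {q1..q2} v p)) * p
              = Sup (range (fixed_price_revenue q1 q2 g v))
          \<and> (\<forall>p'\<in>v ` {q1..q2}.
               (1 - quality_cdf q1 g (inv_into {q1..q2} v p')) * p'
                 \<le> (1 - quality_cdf q1 g (inv_into {q1..q2} v p)) * p))"
proof -
  let ?Q = "{q1..q2}"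
  let ?R = "fixed_price_revenue q1 q2 g v"
  note gint = assms(3)
  define B where "B p = {q\<in>?Q. p \<le> v q}" for p
  define A where "A p = {q\<in>?Q. v q < p}" for p
  have Bclosed: "closed (B p)" for p
  proof -
    have "B p = ?Q \<inter> v -` {p..}" by (auto simp: B_def)
    thus ?thesis using continuous_closed_preimage[OF assms(6)] by auto
  qed
  have Bsets: "B p \<in> sets lborel" for p using Bclosed by auto
  have Asets: "A p \<in> sets lborel" for p
  proof -
    have "A p = ?Q - B p" by (auto simp: A_def B_def)
    thus ?thesis using Bsets by auto
  qed
  have AB: "A p \<inter> B p = {}" "A p \<union> B p = ?Q" for p by (auto simp: A_def B_def)
  have gB: "set_integrable lborel (B p) g" for p
    by (rule set_integrable_subset[OF gint Bsets]) (auto simp: B_def)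
  have eqset: "{signaling_revenue q1 q2 g \<pi> p | \<pi> p.
               signaling_mechanism q1 q2 \<pi> \<and> obedient q1 q2 g v \<pi> p} = range ?R"
  proof (intro equalityI subsetI)
    fix r assume "r \<in> {signaling_revenue q1 q2 g \<pi> p | \<pi> p.
               signaling_mechanism q1 q2 \<pi> \<and> obedient q1 q2 g v \<pi> p}"
    then obtain \<pi> p where r: "r = signaling_revenue q1 q2 g \<pi> p"
      and sm: "signaling_mechanism q1 q2 \<pi>" and ob: "obedient q1 q2 g v \<pi> p" by blast
    have pimeas: "\<pi> \<in> borel_measurable lborel" and pib: "\<forall>q\<in>?Q. 0 \<le> \<pi> q \<and> \<pi> q \<le> 1"
      using sm by (auto simp: signaling_mechanism_def)
    have pgi: "set_integrable lborel ?Q (\<lambda>q. \<pi> q * g q)"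
    proof (rule set_integrable_bound[OF gint])
      show "set_borel_measurable lborel ?Q (\<lambda>q. \<pi> q * g q)"
      proof -
        have "(\<lambda>x. indicator ?Q x *\<^sub>R g x) \<in> borel_measurable lborel"
          using gint unfolding set_integrable_def by (rule borel_measurable_integrable)
        hence "(\<lambda>x. \<pi> x * (indicator ?Q x *\<^sub>R g x)) \<in> borel_measurable lborel"
          using pimeas by (intro borel_measurable_times) auto
        moreover have "(\<lambda>x. \<pi> x * (indicator ?Q x *\<^sub>R g x)) = (\<lambda>x. indicator ?Q x *\<^sub>R (\<pi> x * g x))"
          by (auto simp: fun_eq_iff)
        ultimately show ?thesis unfolding set_borel_measurable_def by simp
      qed
      show "AE x in lborel. x \<in> ?Q \<longrightarrow> norm (\<pi> x * g x) \<le> norm (g x)"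
        using pib by (intro AE_I2) (auto simp: abs_mult intro!: mult_left_le_one_le)
    qed
    have pgA: "set_integrable lborel (A p) (\<lambda>q. \<pi> q * g q)"
      by (rule set_integrable_subset[OF pgi Asets]) (auto simp: A_def)
    have pgB: "set_integrable lborel (B p) (\<lambda>q. \<pi> q * g q)"
      by (rule set_integrable_subset[OF pgi Bsets]) (auto simp: B_def)
    have "(LINT q:?Q|lborel. \<pi> q * g q) = (LINT q:A p|lborel. \<pi> q * g q) + (LINT q:B p|lborel. \<pi> q * g q)"
      using set_integral_Un[OF AB(1) pgA pgB] AB(2) by simp
    also have "(LINT q:A p|lborel. \<pi> q * g q) = 0" using ob by (simp add: obedient_def A_def)
    also have "(LINT q:B p|lborel. \<pi> q * g q) = (LINT q:B p|lborel. g q) - (LINT q:B p|lborel. (1 - \<pi> q) * g q)"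
    proof -
      have "(LINT q:B p|lborel. g q - \<pi> q * g q) = (LINT q:B p|lborel. g q) - (LINT q:B p|lborel. \<pi> q * g q)"
        using set_integral_diff(2)[OF gB pgB] .
      moreover have "(\<lambda>q. g q - \<pi> q * g q) = (\<lambda>q. (1 - \<pi> q) * g q)" by (auto simp: algebra_simps)
      ultimately show ?thesis by simp
    qed
    also have "(LINT q:B p|lborel. (1 - \<pi> q) * g q) = 0" using ob by (simp add: obedient_def B_def)
    finally have "r = ?R p" using r by (simp add: signaling_revenue_def fixed_price_revenue_def B_def)
    thus "r \<in> range ?R" by blast
  next
    fix r assume "r \<in> range ?R"
    then obtain p where r: "r = ?R p" by blast
    define \<pi> :: "real \<Rightarrow> real" where "\<pi> = indicator (B p)"
    have sm: "signaling_mechanism q1 q2 \<pi>"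
      using Bsets by (auto simp: signaling_mechanism_def \<pi>_def indicator_def)
    have "(LINT q:A p|lborel. \<pi> q * g q) = (LINT q:A p|lborel. 0)"
      by (rule set_lebesgue_integral_cong[OF Asets]) (auto simp: \<pi>_def A_def B_def)
    moreover have "(LINT q:B p|lborel. (1 - \<pi> q) * g q) = (LINT q:B p|lborel. 0)"
      by (rule set_lebesgue_integral_cong[OF Bsets]) (auto simp: \<pi>_def)
    ultimately have ob: "obedient q1 q2 g v \<pi> p"
      by (simp add: obedient_def A_def B_def set_lebesgue_integral_def)
    have "(LINT q:?Q|lborel. \<pi> q * g q) = (LINT q:B p|lborel. g q)"
      unfolding set_lebesgue_integral_def \<pi>_def
      by (rule Bochner_Integration.integral_cong) (auto simp: B_def indicator_def)
    hence "r = signaling_revenue q1 q2 g \<pi> p"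
      using r by (simp add: signaling_revenue_def fixed_price_revenue_def B_def)
    thus "r \<in> {signaling_revenue q1 q2 g \<pi> p | \<pi> p.
               signaling_mechanism q1 q2 \<pi> \<and> obedient q1 q2 g v \<pi> p}" using sm ob by blast
  qed
  define F where "F x = integral {q1..x} g" for x
  have gHK: "g integrable_on ?Q" "(LINT q:?Q|lborel. g q) = integral ?Q g"
    using set_borel_integral_eq_integral[OF gint] by auto
  have int1: "integral ?Q g = 1" using gHK(2) assms(4) by simp
  have cdfF: "quality_cdf q1 g x = F x" if "x \<in> ?Q" for x
  proof -
    have "set_integrable lborel {q1..x} g"
      by (rule set_integrable_subset[OF gint]) (use that in auto)
    thus ?thesis unfolding quality_cdf_def F_def
      using set_borel_integral_eq_integral(2) by blast
  qed
  have upper: "(LINT q:{x..q2}|lborel. g q) = 1 - F x" if "x \<in> ?Q" for x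
  proof -
    have "set_integrable lborel {x..q2} g"
      by (rule set_integrable_subset[OF gint]) (use that in auto)
    hence "(LINT q:{x..q2}|lborel. g q) = integral {x..q2} g"
      using set_borel_integral_eq_integral(2) by blast
    moreover have "integral {q1..x} g + integral {x..q2} g = integral ?Q g"
      using Henstock_Kurzweil_Integration.integral_combine[OF _ _ gHK(1), of x] that by auto
    ultimately show ?thesis using int1 by (simp add: F_def)
  qed
  have Bvx: "B (v x) = {x..q2}" if "x \<in> ?Q" for x
    using that sm_le_iff[OF assms(5) that] by (auto simp: B_def)
  have Rvx: "?R (v x) = (1 - F x) * v x" if "x \<in> ?Q" for x
    using Bvx[OF that] upper[OF that] unfolding fixed_price_revenue_def B_def[symmetric]
    by simp
  have injv: "inj_on v ?Q" using strict_mono_on_imp_inj_on[OF assms(5)] .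
  have invv: "inv_into ?Q v (v x) = x" if "x \<in> ?Q" for x
    using inv_into_f_f[OF injv that] .
  have contF: "continuous_on ?Q F"
    unfolding F_def using indefinite_integral_continuous_1[OF gHK(1)] .
  have contk: "continuous_on ?Q (\<lambda>x. (1 - F x) * v x)"
    by (intro continuous_intros contF assms(6))
  obtain x0 where x0: "x0 \<in> ?Q" and x0max: "\<And>y. y \<in> ?Q \<Longrightarrow> (1 - F y) * v y \<le> (1 - F x0) * v x0"
    using continuous_attains_sup[OF compact_Icc _ contk] assms(1) by auto
  have q1Q: "q1 \<in> ?Q" and q2Q: "q2 \<in> ?Q" using assms(1) by auto
  have F1: "F q1 = 0" by (simp add: F_def)
  have F2: "F q2 = 1" using int1 by (simp add: F_def)
  have Rle: "?R p \<le> (1 - F x0) * v x0" for p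
  proof (cases "p \<le> v q1")
    case True
    have "B p = ?Q"
    proof -
      have "p \<le> v q" if "q \<in> ?Q" for q
        using True sm_le_iff[OF assms(5) q1Q that] that by auto
      thus ?thesis by (auto simp: B_def)
    qed
    hence "?R p = p" using assms(4) unfolding fixed_price_revenue_def B_def[symmetric] by simp
    also have "\<dots> \<le> (1 - F q1) * v q1" using True F1 by simp
    also have "\<dots> \<le> (1 - F x0) * v x0" using x0max[OF q1Q] .
    finally show ?thesis .
  next
    case False
    show ?thesis
    proof (cases "p \<le> v q2")
      case True
      obtain x where "q1 \<le> x" "x \<le> q2" "v x = p"
        using IVT'[of v q1 p q2] False True assms(1,6) by auto
      hence xQ: "x \<in> ?Q" and "p = v x" by auto
      thus ?thesis using Rvx[OF xQ] x0max[OF xQ] by simp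
    next
      case False
      have "B p = {}"
      proof -
        have "v q < p" if "q \<in> ?Q" for q
          using False sm_le_iff[OF assms(5) that q2Q] that by auto
        thus ?thesis unfolding B_def by (metis (mono_tags, lifting) empty_Collect_eq not_le)
      qed
      hence "?R p = 0" unfolding fixed_price_revenue_def B_def[symmetric] by (simp add: set_lebesgue_integral_def)
      also have "\<dots> = (1 - F q2) * v q2" using F2 by simp
      also have "\<dots> \<le> (1 - F x0) * v x0" using x0max[OF q2Q] .
      finally show ?thesis .
    qed
  qed
  have supR: "Sup (range ?R) = (1 - F x0) * v x0"
  proof (rule cSup_eq_maximum)
    show "(1 - F x0) * v x0 \<in> range ?R" using Rvx[OF x0] by (metis rangeI)
    show "r \<le> (1 - F x0) * v x0" if "r \<in> range ?R" for r using that Rle by auto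
  qed
  have cdfinv: "quality_cdf q1 g (inv_into ?Q v (v x)) = F x" if "x \<in> ?Q" for x
    using invv[OF that] cdfF[OF that] by simp
  show ?thesis
  proof (intro conjI bexI[of _ "v x0"])
    show "Sup {signaling_revenue q1 q2 g \<pi> p | \<pi> p.
               signaling_mechanism q1 q2 \<pi> \<and> obedient q1 q2 g v \<pi> p}
         = Sup (range ?R)" using eqset by simp
    show "(1 - quality_cdf q1 g (inv_into ?Q v (v x0))) * v x0 = Sup (range ?R)"
      using cdfinv[OF x0] supR by simp
    show "\<forall>p'\<in>v ` ?Q. (1 - quality_cdf q1 g (inv_into ?Q v p')) * p'
                 \<le> (1 - quality_cdf q1 g (inv_into ?Q v (v x0))) * v x0"
      using cdfinv x0 x0max by auto
    show "v x0 \<in> v ` ?Q" using x0 by simp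
  qed
qed

end
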